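(* Let $N\ge2$ and $r\ge1$ be integers, let $(z_1,\dots,z_r)\in\mathbb C^r$ with $|z_i|\le1$ for all $i$, let $K\subset\mathbb C^r$ be compact, and let $k_0$ be the smallest non-negative integer such that $(s_1+k_0,s_2,\dots,s_r)\in U_r$ for all $(s_1,\dots,s_r)\in K$. Then the family of functions $$f_{\mathbf n,k}(s_1,\dots,s_r)=\frac{(s_1-1)_{k+1}}{(k+1)!}\,\frac{z_1^{n_1}z_2^{n_2}\cdots z_r^{n_r}}{n_1^{s_1+k}n_2^{s_2}\cdots n_r^{s_r}},\qquad n_1\ge n_2\ge\cdots\ge n_r\ge N,\ k\ge k_0,$$ converges normally on $K$, i.e. $\Sigma_N:=\sum_{k\ge k_0}\sum_{n_1\ge\cdots\ge n_r\ge N}\sup_K|f_{\mathbf n,k}|<\infty$. Moreover, there is $\epsilon>0$ such that $\Sigma_N=O(N^{-\epsilon})$ as $N\to\infty$.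
   Context: $U_r:=\{(s_1,\dots,s_r)\in\mathbb C^r:\Re(s_1+\cdots+s_i)>i\text{ for all }1\le i\le r\}$. $(s)_k=s(s+1)\cdots(s+k-1)$ is the Pochhammer symbol. *)

theory Defs
  imports "HOL-Analysis.Analysis"
begin

text \<open>Points of C^r are functions nat \<Rightarrow> complex, coordinates s 1, ..., s r
  (product topology on nat \<Rightarrow> complex).\<close>

definition U :: "nat \<Rightarrow> (nat \<Rightarrow> complex) set" where
  "U r = {s. \<forall>i\<in>{1..r}. Re (\<Sum>j=1..i. s j) > real i}"

definition k0 :: "nat \<Rightarrow> (nat \<Rightarrow> complex) set \<Rightarrow> nat" where
  "k0 r K = (LEAST k. \<forall>s\<in>K. s(1 := s 1 + of_nat k) \<in> U r)"

definition idx :: "nat \<Rightarrow> nat \<Rightarrow> (nat \<Rightarrow> nat) set" where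
  "idx r N = {n. (\<forall>j\<in>{1..<r}. n (j+1) \<le> n j) \<and> (\<forall>j\<in>{1..r}. N \<le> n j)
                 \<and> (\<forall>j. j \<notin> {1..r} \<longrightarrow> n j = 0)}"

definition fterm :: "nat \<Rightarrow> (nat \<Rightarrow> complex) \<Rightarrow> (nat \<Rightarrow> nat) \<Rightarrow> nat \<Rightarrow> (nat \<Rightarrow> complex) \<Rightarrow> complex" where
  "fterm r z n k s =
     pochhammer (s 1 - 1) (k+1) / fact (k+1) * (\<Prod>j=1..r. z j ^ n j)
     / (of_nat (n 1) powr (s 1 + of_nat k) * (\<Prod>j=2..r. of_nat (n j) powr s j))"

definition SigmaN :: "nat \<Rightarrow> (nat \<Rightarrow> complex) \<Rightarrow> (nat \<Rightarrow> complex) set \<Rightarrow> nat \<Rightarrow> ennreal" where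
  "SigmaN r z K N = infsum (\<lambda>(k, n). SUP s\<in>K. ennreal (norm (fterm r z n k s)))
                      {(k, n). k0 r K \<le> k \<and> n \<in> idx r N}"

end

theory Submission imports Defs begin

lemma abel_nonneg:
  fixes a x :: "nat \<Rightarrow> real"
  assumes "\<forall>i\<in>{1..r}. 0 \<le> (\<Sum>j=1..i. a j)"
    and "\<forall>i j. 1 \<le> i \<longrightarrow> i \<le> j \<longrightarrow> j \<le> r \<longrightarrow> x j \<le> x i"
    and "\<forall>j\<in>{1..r}. 0 \<le> x j"
  shows "0 \<le> (\<Sum>j=1..r. a j * x j)"
  using assms
proof (induction r arbitrary: x)
  case 0
  then show ?case by simp
next
  case (Suc r)
  define x' where "x' = (\<lambda>j. x j - x (Suc r))"
  have IH: "0 \<le> (\<Sum>j=1..r. a j * x' j)"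
    using Suc.prems unfolding x'_def
    by (intro Suc.IH) auto
  have eq: "(\<Sum>j=1..Suc r. a j * x j) = (\<Sum>j=1..r. a j * x' j) + (\<Sum>j=1..Suc r. a j) * x (Suc r)"
    unfolding x'_def by (simp add: algebra_simps sum_subtractf sum_distrib_right sum_distrib_left)
  have "0 \<le> (\<Sum>j=1..Suc r. a j) * x (Suc r)"
    using Suc.prems(1)[rule_format, of "Suc r"] Suc.prems(3) by (intro mult_nonneg_nonneg) auto
  with IH eq show ?case by linarith
qed

lemma idx_mono:
  assumes "n \<in> idx r N" "1 \<le> i" "i \<le> j" "j \<le> r"
  shows "n j \<le> n i"
  using assms(3,4)
proof (induction j rule: dec_induct)
  case base
  then show ?case by simp
next
  case (step m)
  have "n (m+1) \<le> n m" using assms(1,2) step by (auto simp: idx_def)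
  then show ?case using step by simp
qed

lemma norm_pochhammer_le:
  fixes x :: complex
  assumes "norm x \<le> A"
  shows "norm (pochhammer x n) \<le> pochhammer A n"
proof (induction n)
  case 0
  then show ?case by simp
next
  case (Suc n)
  have A0: "0 \<le> A" using assms norm_ge_zero order_trans by blast
  have "norm (x + of_nat n) \<le> A + of_nat n"
    using assms norm_triangle_ineq[of x "of_nat n"] by simp
  then have "norm (pochhammer x n) * norm (x + of_nat n) \<le> pochhammer A n * (A + of_nat n)"
    using Suc A0 norm_ge_zero[of "pochhammer x n"] norm_ge_zero[of "x + of_nat n"] by (intro mult_mono) (auto simp del: norm_ge_zero)
  then show ?case by (simp add: pochhammer_Suc norm_mult)
qed

lemma prod_powr_abel:
  fixes n :: "nat \<Rightarrow> nat" and \<sigma> :: "nat \<Rightarrow> real"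
  assumes "\<forall>i\<in>{1..r}. real i * c \<le> (\<Sum>j=1..i. \<sigma> j)"
    and "\<forall>i j. 1 \<le> i \<longrightarrow> i \<le> j \<longrightarrow> j \<le> r \<longrightarrow> n j \<le> n i"
    and "\<forall>j\<in>{1..r}. 1 \<le> n j"
  shows "(\<Prod>j=1..r. real (n j) powr c) \<le> (\<Prod>j=1..r. real (n j) powr \<sigma> j)"
proof -
  have "0 \<le> (\<Sum>j=1..r. (\<sigma> j - c) * ln (real (n j)))"
  proof (rule abel_nonneg)
    show "\<forall>i\<in>{1..r}. 0 \<le> (\<Sum>j=1..i. \<sigma> j - c)"
      using assms(1) by (simp add: sum_subtractf)
    show "\<forall>i j. 1 \<le> i \<longrightarrow> i \<le> j \<longrightarrow> j \<le> r \<longrightarrow> ln (real (n j)) \<le> ln (real (n i))"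
      using assms(2,3) by (auto intro!: ln_mono) (metis atLeastAtMost_iff order_trans less_eq_Suc_le)
    show "\<forall>j\<in>{1..r}. 0 \<le> ln (real (n j))"
      using assms(3) by auto
  qed
  then have le: "(\<Sum>j=1..r. c * ln (real (n j))) \<le> (\<Sum>j=1..r. \<sigma> j * ln (real (n j)))"
    by (simp add: algebra_simps sum_subtractf)
  have pos: "\<forall>j\<in>{1..r}. n j \<noteq> 0" using assms(3) by fastforce
  have "(\<Prod>j=1..r. real (n j) powr c) = exp (\<Sum>j=1..r. c * ln (real (n j)))"
    using pos by (auto simp: exp_sum powr_def intro!: prod.cong)
  also have "\<dots> \<le> exp (\<Sum>j=1..r. \<sigma> j * ln (real (n j)))" using le by simp
  also have "\<dots> = (\<Prod>j=1..r. real (n j) powr \<sigma> j)"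
    using pos by (auto simp: exp_sum powr_def intro!: prod.cong)
  finally show ?thesis .
qed

lemma sum_upd1:
  fixes s :: "nat \<Rightarrow> complex"
  assumes "1 \<le> i"
  shows "(\<Sum>j=1..i. (s(1 := s 1 + w)) j) = (\<Sum>j=1..i. s j) + w"
proof -
  have "(\<Sum>j=1..i. (s(1 := s 1 + w)) j) = (s(1 := s 1 + w)) 1 + (\<Sum>j=Suc 1..i. (s(1 := s 1 + w)) j)"
    using assms by (rule sum.atLeast_Suc_atMost)
  also have "(\<Sum>j=Suc 1..i. (s(1 := s 1 + w)) j) = (\<Sum>j=Suc 1..i. s j)"
    by (rule sum.cong) auto
  also have "(\<Sum>j=1..i. s j) = s 1 + (\<Sum>j=Suc 1..i. s j)"
    using assms by (rule sum.atLeast_Suc_atMost)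
  ultimately show ?thesis by simp
qed

lemma idx_sum_bound:
  fixes g :: "nat \<Rightarrow> real"
  assumes g0: "\<And>m. 0 \<le> g m" and gs: "summable g" and fin: "finite G" and sub: "G \<subseteq> idx r N"
  shows "(\<Sum>n\<in>G. \<Prod>j=1..r. g (n j)) \<le> (suminf g)^r"
proof -
  define Mx where "Mx = (\<Sum>n\<in>G. \<Sum>j=1..r. n j)"
  define \<rho> where "\<rho> = (\<lambda>n::nat\<Rightarrow>nat. restrict n {1..r})"
  have inj: "inj_on \<rho> G"
  proof (rule inj_onI)
    fix n n' assume nG: "n \<in> G" and n'G: "n' \<in> G" and eq: "\<rho> n = \<rho> n'"
    show "n = n'"
    proof
      fix j
      show "n j = n' j"
      proof (cases "j \<in> {1..r}")
        case True
        then show ?thesis using fun_cong[OF eq, of j] by (simp add: \<rho>_def)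
      next
        case False
        have "n \<in> idx r N" "n' \<in> idx r N" using nG n'G sub by auto
        then show ?thesis using False unfolding idx_def by auto
      qed
    qed
  qed
  have bnd: "n j \<le> Mx" if "n \<in> G" "j \<in> {1..r}" for n j
  proof -
    have "n j \<le> (\<Sum>j=1..r. n j)" using that by (intro member_le_sum) auto
    also have "\<dots> \<le> Mx" unfolding Mx_def using that fin by (intro member_le_sum) auto
    finally show ?thesis .
  qed
  have img: "\<rho> ` G \<subseteq> PiE {1..r} (\<lambda>_. {..Mx})"
    using bnd by (auto simp: \<rho>_def)
  have "(\<Sum>n\<in>G. \<Prod>j=1..r. g (n j)) = (\<Sum>p\<in>\<rho> ` G. \<Prod>j=1..r. g (p j))"
    by (subst sum.reindex[OF inj]) (auto simp: \<rho>_def intro!: sum.cong prod.cong)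
  also have "\<dots> \<le> (\<Sum>p\<in>PiE {1..r} (\<lambda>_. {..Mx}). \<Prod>j=1..r. g (p j))"
    using img g0 by (intro sum_mono2) (auto intro!: finite_PiE prod_nonneg)
  also have "\<dots> = (\<Prod>j=1..r. \<Sum>m\<in>{..Mx}. g m)"
    by (subst prod_sum_PiE) auto
  also have "\<dots> \<le> (\<Prod>j=1..r. suminf g)"
    using g0 gs by (intro prod_mono) (auto intro!: sum_nonneg sum_le_suminf)
  also have "\<dots> = (suminf g)^r" by simp
  finally show ?thesis .
qed

lemma poch_summable:
  fixes A :: real and k0 :: nat
  assumes "0 < A"
  shows "summable (\<lambda>m. pochhammer A (k0 + m + 1) / fact (k0 + m + 1) * (1/2)^m)"
proof (rule summable_ratio_test[where c="3/4" and N="nat \<lceil>2*A\<rceil>"])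
  fix m assume m: "nat \<lceil>2*A\<rceil> \<le> m"
  define q :: nat where "q = k0 + m + 1"
  define p where "p = pochhammer A q"
  have p0: "0 \<le> p" unfolding p_def using assms by (simp add: pochhammer_nonneg)
  have fpos: "0 < (fact q :: real)" by simp
  have ratio: "(A + real q) / (real q + 1) \<le> 3/2"
    using m unfolding q_def by (simp add: field_simps)
  have e1: "pochhammer A (k0 + Suc m + 1) = p * (A + real q)"
    unfolding p_def q_def by (simp add: pochhammer_Suc)
  have e2: "(fact (k0 + Suc m + 1) :: real) = (real q + 1) * fact q"
    unfolding q_def by (simp add: algebra_simps)
  have "norm (pochhammer A (k0 + Suc m + 1) / fact (k0 + Suc m + 1) * (1/2::real)^Suc m)
        = norm (p * (A + real q) / ((real q + 1) * fact q) * (1/2::real)^Suc m)"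
    by (simp only: e1 e2)
  also have "\<dots> = p / fact q * (1/2)^m * ((A + real q) / (real q + 1) / 2)"
    using p0 assms by (simp add: abs_mult field_simps)
  also have "\<dots> \<le> p / fact q * (1/2)^m * (3/4)"
    using ratio p0 by (intro mult_left_mono) (auto simp: field_simps)
  also have "\<dots> = 3/4 * norm (pochhammer A (k0 + m + 1) / fact (k0 + m + 1) * (1/2::real)^m)"
    using p0 unfolding p_def q_def by (simp add: abs_mult mult_ac)
  finally show "norm (pochhammer A (k0 + Suc m + 1) / fact (k0 + Suc m + 1) * (1/2::real)^Suc m)
        \<le> 3/4 * norm (pochhammer A (k0 + m + 1) / fact (k0 + m + 1) * (1/2::real)^m)" .
qed simp

lemma key_bound:
  fixes z s :: "nat \<Rightarrow> complex" and n :: "nat \<Rightarrow> nat"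
  assumes r1: "1 \<le> r" and zb: "\<forall>i\<in>{1..r}. norm (z i) \<le> 1"
   and N2: "2 \<le> N" and nidx: "n \<in> idx r N" and kk: "\<kappa> \<le> k"
   and A: "norm (s 1 - 1) \<le> A"
   and eps: "0 < \<epsilon>"
   and part: "\<forall>i\<in>{1..r}. real i * (1 + 2*\<epsilon>) \<le> Re (\<Sum>j=1..i. s j) + real \<kappa>"
  shows "norm (fterm r z n k s) \<le> pochhammer A (\<kappa> + (k-\<kappa>) + 1) / fact (\<kappa> + (k-\<kappa>) + 1) * (1/2)^(k-\<kappa>)
           * (real N powr -\<epsilon> * (\<Prod>j=1..r. real (n j) powr -(1+\<epsilon>)))"
proof -
  define \<sigma> where "\<sigma> = (\<lambda>j. Re ((s(1 := s 1 + of_nat \<kappa>)) j))"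
  define m where "m = k - \<kappa>"
  have km: "\<kappa> + m = k" using kk unfolding m_def by simp
  have nge: "\<And>j. j \<in> {1..r} \<Longrightarrow> N \<le> n j" using nidx by (auto simp: idx_def)
  have npos: "\<And>j. j \<in> {1..r} \<Longrightarrow> 0 < real (n j)" using nge N2 by fastforce
  have n1: "1 \<in> {1..r}" using r1 by simp
  have rk: "real k = real \<kappa> + real m" using km by linarith
  have nf: "norm (fact (k+1) :: complex) = fact (k+1)" by (metis norm_of_nat of_nat_fact)
  have psum: "(\<Sum>j=1..i. \<sigma> j) = Re (\<Sum>j=1..i. s j) + real \<kappa>" if "1 \<le> i" for i
    unfolding \<sigma>_def Re_sum[symmetric] using sum_upd1[OF that, of s "of_nat \<kappa>"] by simp
  have abel: "(\<Prod>j=1..r. real (n j) powr (1 + 2*\<epsilon>)) \<le> (\<Prod>j=1..r. real (n j) powr \<sigma> j)"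
  proof (rule prod_powr_abel)
    show "\<forall>i\<in>{1..r}. real i * (1 + 2 * \<epsilon>) \<le> sum \<sigma> {1..i}"
      using part psum by auto
    show "\<forall>i j. 1 \<le> i \<longrightarrow> i \<le> j \<longrightarrow> j \<le> r \<longrightarrow> n j \<le> n i"
      using idx_mono[OF nidx] by blast
    show "\<forall>j\<in>{1..r}. 1 \<le> n j" using nge N2 by fastforce
  qed
  have prodeps: "real N powr \<epsilon> \<le> (\<Prod>j=1..r. real (n j) powr \<epsilon>)"
  proof -
    have N1: "1 \<le> real N powr \<epsilon>" using N2 eps by (intro ge_one_powr_ge_zero) auto
    have "real N powr \<epsilon> = (real N powr \<epsilon>)^1" by simp
    also have "\<dots> \<le> (real N powr \<epsilon>)^r" using N1 r1 by (intro power_increasing) auto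
    also have "\<dots> = (\<Prod>j=1..r. real N powr \<epsilon>)" by simp
    also have "\<dots> \<le> (\<Prod>j=1..r. real (n j) powr \<epsilon>)"
      using nge eps by (intro prod_mono) (auto intro!: powr_mono2)
    finally show ?thesis .
  qed
  define L where "L = 2^m * real N powr \<epsilon> * (\<Prod>j=1..r. real (n j) powr (1+\<epsilon>))"
  have Lpos: "0 < L" unfolding L_def using N2 npos by (intro mult_pos_pos prod_pos) auto
  define Den where "Den = real (n 1) powr (Re (s 1) + real k) * (\<Prod>j=2..r. real (n j) powr Re (s j))"
  have Den_eq: "Den = real (n 1) powr real m * (\<Prod>j=1..r. real (n j) powr \<sigma> j)"
  proof -
    have "(\<Prod>j=1..r. real (n j) powr \<sigma> j) = real (n 1) powr \<sigma> 1 * (\<Prod>j=Suc 1..r. real (n j) powr \<sigma> j)"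
      using r1 by (rule prod.atLeast_Suc_atMost)
    also have "(\<Prod>j=Suc 1..r. real (n j) powr \<sigma> j) = (\<Prod>j=2..r. real (n j) powr Re (s j))"
      by (rule prod.cong) (auto simp: \<sigma>_def)
    finally show ?thesis
      unfolding Den_def using rk by (simp add: \<sigma>_def powr_add[symmetric] algebra_simps)
  qed
  have m2: "2^m \<le> real (n 1) powr real m"
  proof -
    have "(2::real)^m = 2 powr real m" by (simp add: powr_realpow)
    also have "\<dots> \<le> real (n 1) powr real m" using nge[OF n1] N2 by (intro powr_mono2) auto
    finally show ?thesis .
  qed
  have c_split: "(\<Prod>j=1..r. real (n j) powr (1 + 2*\<epsilon>)) = (\<Prod>j=1..r. real (n j) powr (1+\<epsilon>)) * (\<Prod>j=1..r. real (n j) powr \<epsilon>)"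
    by (simp add: prod.distrib[symmetric] powr_add[symmetric] algebra_simps)
  have LDen: "L \<le> Den"
  proof -
    have "L \<le> real (n 1) powr real m * ((\<Prod>j=1..r. real (n j) powr (1+\<epsilon>)) * (\<Prod>j=1..r. real (n j) powr \<epsilon>))"
    proof -
      define P1 where "P1 = (\<Prod>j=1..r. real (n j) powr (1+\<epsilon>))"
      define Pe where "Pe = (\<Prod>j=1..r. real (n j) powr \<epsilon>)"
      have P10: "0 \<le> P1" unfolding P1_def by (intro prod_nonneg) auto
      have "L = 2^m * (real N powr \<epsilon> * P1)" unfolding L_def P1_def by (simp add: mult_ac)
      also have "\<dots> \<le> real (n 1) powr real m * (Pe * P1)"
        using m2 prodeps P10 unfolding Pe_def by (intro mult_mono mult_right_mono) auto
      finally show ?thesis unfolding P1_def Pe_def by (simp add: mult_ac)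
    qed
    also have "\<dots> \<le> real (n 1) powr real m * (\<Prod>j=1..r. real (n j) powr \<sigma> j)"
      using abel c_split by (intro mult_left_mono) auto
    finally show ?thesis using Den_eq by simp
  qed
  have Pb: "norm (pochhammer (s 1 - 1) (k+1)) \<le> pochhammer A (k+1)"
    using A by (rule norm_pochhammer_le)
  have Zb: "norm (\<Prod>j=1..r. z j ^ n j) \<le> 1"
    unfolding prod_norm[symmetric] norm_power using zb by (intro prod_le_1) (auto intro: power_le_one)
  have normDen: "norm (of_nat (n 1) powr (s 1 + of_nat k) * (\<Prod>j=2..r. of_nat (n j) powr s j) :: complex) = Den"
    unfolding Den_def norm_mult prod_norm[symmetric]
    by (simp add: norm_powr_real_powr)
  have "norm (fterm r z n k s) = norm (pochhammer (s 1 - 1) (k+1)) / fact (k+1) * norm (\<Prod>j=1..r. z j ^ n j) / Den"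
    unfolding fterm_def normDen[symmetric] norm_divide norm_mult nf by simp
  also have "\<dots> \<le> pochhammer A (k+1) / fact (k+1) * 1 / L"
  proof (rule frac_le)
    have PA: "0 \<le> pochhammer A (k+1)" using Pb norm_ge_zero order_trans by blast
    show "0 \<le> pochhammer A (k+1) / fact (k+1) * 1" using PA by simp
    show "norm (pochhammer (s 1 - 1) (k+1)) / fact (k+1) * norm (\<Prod>j=1..r. z j ^ n j) \<le> pochhammer A (k+1) / fact (k+1) * 1"
      using Pb Zb PA by (intro mult_mono divide_right_mono) auto
  qed (use LDen Lpos in auto)
  also have "\<dots> = pochhammer A (\<kappa> + (k-\<kappa>) + 1) / fact (\<kappa> + (k-\<kappa>) + 1) * (1/2)^(k-\<kappa>)
           * (real N powr -\<epsilon> * (\<Prod>j=1..r. real (n j) powr -(1+\<epsilon>)))"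
  proof -
    have e1: "(\<Prod>j=1..r. real (n j) powr -(1+\<epsilon>)) = inverse (\<Prod>j=1..r. real (n j) powr (1+\<epsilon>))"
    proof -
      have "(\<Prod>j=1..r. real (n j) powr -(1+\<epsilon>)) = prod (inverse \<circ> (\<lambda>j. real (n j) powr (1+\<epsilon>))) {1..r}"
        by (rule prod.cong) (simp_all only: comp_apply powr_minus)
      also have "\<dots> = inverse (\<Prod>j=1..r. real (n j) powr (1+\<epsilon>))" by (rule prod_inversef)
      finally show ?thesis .
    qed
    have e2: "real N powr -\<epsilon> = inverse (real N powr \<epsilon>)" by (rule powr_minus)
    have e3: "(1/2::real)^(k-\<kappa>) = inverse (2^m)" unfolding m_def by (simp only: power_one_over inverse_eq_divide)
    have kk': "\<kappa> + (k - \<kappa>) = k" using kk by (rule add_diff_inverse_nat[OF leD])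
    show ?thesis unfolding e1 e2 e3 L_def kk'
      by (simp only: divide_inverse inverse_mult_distrib mult_1_right mult.assoc)
  qed
  finally show ?thesis .
qed

theorem lemma5:
  fixes r :: nat and z :: "nat \<Rightarrow> complex" and K :: "(nat \<Rightarrow> complex) set"
  assumes "1 \<le> r"
    and "\<forall>i\<in>{1..r}. norm (z i) \<le> 1"
    and "compact K"
    and "\<forall>s\<in>K. \<forall>j. j \<notin> {1..r} \<longrightarrow> s j = 0"
  shows "(\<forall>N\<ge>2. SigmaN r z K N < \<infinity>) \<and>
         (\<exists>\<epsilon>>0. \<exists>C::real. eventually (\<lambda>N. SigmaN r z K N \<le> ennreal (C * real N powr (-\<epsilon>))) at_top)"
proof -
  note r1 = assms(1) and zb = assms(2) and Kc = assms(3)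
  have cont_coord: "\<And>j. continuous_on K (\<lambda>s::nat\<Rightarrow>complex. s j)"
    by (rule continuous_on_subset[OF continuous_on_product_coordinates]) simp
  have c1: "continuous_on K (\<lambda>s. \<Sum>j=1..r. norm (s j))"
    by (rule continuous_on_sum, rule continuous_on_norm, rule cont_coord)
  have "compact ((\<lambda>s. \<Sum>j=1..r. norm (s j)) ` K)"
    by (rule compact_continuous_image[OF c1 Kc])
  then have "bounded ((\<lambda>s. \<Sum>j=1..r. norm (s j)) ` K)" by (rule compact_imp_bounded)
  then obtain M where M: "\<And>x. x \<in> (\<lambda>s. \<Sum>j=1..r. norm (s j)) ` K \<Longrightarrow> norm x \<le> M"
    unfolding bounded_iff by blast
  have Mb: "(\<Sum>j=1..r. norm (s j)) \<le> M" if "s \<in> K" for s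
    using M[of "\<Sum>j=1..r. norm (s j)"] that by auto
  have Mj: "norm (s j) \<le> M" if "s \<in> K" "j \<in> {1..r}" for s j
  proof -
    have "norm (s j) \<le> (\<Sum>j=1..r. norm (s j))" using that by (intro member_le_sum) auto
    then show ?thesis using Mb[OF that(1)] by linarith
  qed
  have Rb: "\<bar>Re (\<Sum>j=1..i. s j)\<bar> \<le> M" if "s \<in> K" "i \<in> {1..r}" for s i
  proof -
    have "\<bar>Re (\<Sum>j=1..i. s j)\<bar> \<le> norm (\<Sum>j=1..i. s j)" by (rule abs_Re_le_cmod)
    also have "\<dots> \<le> (\<Sum>j=1..i. norm (s j))" by (rule norm_sum)
    also have "\<dots> \<le> (\<Sum>j=1..r. norm (s j))" using that by (intro sum_mono2) auto
    finally show ?thesis using Mb[OF that(1)] by linarith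
  qed
  define P where "P k = (\<forall>s\<in>K. s(1 := s 1 + of_nat k) \<in> U r)" for k :: nat
  define Kb where "Kb = nat \<lceil>M\<rceil> + r + 1"
  have KbM: "M + real r + 1 \<le> real Kb" unfolding Kb_def using real_nat_ceiling_ge[of M] by simp
  have "P Kb"
    unfolding P_def U_def
  proof (intro ballI CollectI)
    fix s i assume s: "s \<in> K" and i: "i \<in> {1..r}"
    have e: "Re (\<Sum>j=1..i. (s(1 := s 1 + of_nat Kb)) j) = Re (\<Sum>j=1..i. s j) + real Kb"
      using sum_upd1[of i s "of_nat Kb"] i by simp
    have "\<bar>Re (\<Sum>j=1..i. s j)\<bar> \<le> M" using Rb s i by blast
    then have m: "- M \<le> Re (\<Sum>j=1..i. s j)" by linarith
    have "real i \<le> real r" using i by simp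
    then show "real i < Re (\<Sum>j=1..i. (s(1 := s 1 + of_nat Kb)) j)"
      using e m KbM by linarith
  qed
  then have Pk0: "P (k0 r K)" unfolding k0_def P_def by (rule LeastI)
  define \<kappa> where "\<kappa> = k0 r K"
  have Pk: "real i < Re (\<Sum>j=1..i. s j) + real \<kappa>" if "s \<in> K" "i \<in> {1..r}" for s i
  proof -
    have "s(1 := s 1 + of_nat \<kappa>) \<in> U r" using Pk0 that unfolding P_def \<kappa>_def by blast
    then have "real i < Re (\<Sum>j=1..i. (s(1 := s 1 + of_nat \<kappa>)) j)" using that unfolding U_def by blast
    moreover have "Re (\<Sum>j=1..i. (s(1 := s 1 + of_nat \<kappa>)) j) = Re (\<Sum>j=1..i. s j) + real \<kappa>"
      using sum_upd1[of i s "of_nat \<kappa>"] that by simp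
    ultimately show ?thesis by linarith
  qed
  have "\<forall>i\<in>{1..r}. \<exists>d>0. \<forall>s\<in>K. real i + d \<le> Re (\<Sum>j=1..i. s j) + real \<kappa>"
  proof
    fix i assume i: "i \<in> {1..r}"
    show "\<exists>d>0. \<forall>s\<in>K. real i + d \<le> Re (\<Sum>j=1..i. s j) + real \<kappa>"
    proof (cases "K = {}")
      case True
      then show ?thesis by (intro exI[of _ 1]) auto
    next
      case False
      have "continuous_on K (\<lambda>s. Re (\<Sum>j=1..i. s j))"
        by (intro continuous_intros cont_coord)
      then obtain x where x: "x \<in> K" "\<And>y. y \<in> K \<Longrightarrow> Re (\<Sum>j=1..i. x j) \<le> Re (\<Sum>j=1..i. y j)"
        using continuous_attains_inf[OF Kc False] by blast
      show ?thesis
        using Pk[OF x(1) i] x(2)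
        by (intro exI[of _ "Re (\<Sum>j=1..i. x j) + real \<kappa> - real i"]) force
    qed
  qed
  then obtain D where D: "\<forall>i\<in>{1..r}. D i > 0 \<and> (\<forall>s\<in>K. real i + D i \<le> Re (\<Sum>j=1..i. s j) + real \<kappa>)"
    by metis
  define \<delta> where "\<delta> = Min (D ` {1..r})"
  have \<delta>pos: "0 < \<delta>" unfolding \<delta>_def using D r1 by (subst Min_gr_iff) auto
  have \<delta>le: "\<delta> \<le> D i" if "i \<in> {1..r}" for i unfolding \<delta>_def using that by (intro Min_le) auto
  define \<epsilon> where "\<epsilon> = \<delta> / (2 * real r)"
  have \<epsilon>pos: "0 < \<epsilon>" unfolding \<epsilon>_def using \<delta>pos r1 by simp
  have part: "\<forall>i\<in>{1..r}. real i * (1 + 2*\<epsilon>) \<le> Re (\<Sum>j=1..i. s j) + real \<kappa>" if s: "s \<in> K" for s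
  proof
    fix i assume i: "i \<in> {1..r}"
    have "real i * (2 * \<epsilon>) = \<delta> * (real i / real r)" unfolding \<epsilon>_def using r1 by (simp add: field_simps)
    also have "\<dots> \<le> \<delta> * 1" using i \<delta>pos by (intro mult_left_mono) auto
    finally have "real i * (2 * \<epsilon>) \<le> D i" using \<delta>le[OF i] by simp
    moreover have "real i + D i \<le> Re (\<Sum>j=1..i. s j) + real \<kappa>" using D i s by blast
    ultimately show "real i * (1 + 2*\<epsilon>) \<le> Re (\<Sum>j=1..i. s j) + real \<kappa>"
      by (simp add: algebra_simps)
  qed
  define A where "A = \<bar>M\<bar> + 1"
  have Apos: "0 < A" unfolding A_def by simp
  have Ab: "norm (s 1 - 1) \<le> A" if "s \<in> K" for s
  proof -
    have "norm (s 1 - 1) \<le> norm (s 1) + 1" using norm_triangle_ineq4[of "s 1" 1] by simp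
    also have "\<dots> \<le> A" unfolding A_def using Mj[OF that, of 1] r1 by auto
    finally show ?thesis .
  qed
  define a where "a = (\<lambda>m. pochhammer A (\<kappa> + m + 1) / fact (\<kappa> + m + 1) * (1/2::real)^m)"
  have a_sum: "summable a" unfolding a_def using Apos by (rule poch_summable)
  have a0: "0 \<le> a m" for m unfolding a_def using Apos by (intro mult_nonneg_nonneg divide_nonneg_nonneg pochhammer_nonneg) auto
  define g where "g = (\<lambda>m::nat. real m powr -(1+\<epsilon>))"
  have g_sum: "summable g" unfolding g_def using \<epsilon>pos by (subst summable_real_powr_iff) auto
  have g0: "0 \<le> g m" for m unfolding g_def by simp
  define C where "C = suminf a * (suminf g)^r"
  have main: "SigmaN r z K N \<le> ennreal (C * real N powr (-\<epsilon>))" if N2: "2 \<le> N" for N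
  proof -
    define S where "S = {(k, n). k0 r K \<le> k \<and> n \<in> idx r N}"
    define h where "h = (\<lambda>n::nat\<Rightarrow>nat. \<Prod>j=1..r. g (n j))"
    define Np where "Np = real N powr (-\<epsilon>)"
    have Np0: "0 \<le> Np" unfolding Np_def by simp
    have h0: "0 \<le> h n" for n unfolding h_def using g0 by (auto intro!: prod_nonneg)
    define b where "b = (\<lambda>(k::nat, n::nat\<Rightarrow>nat). a (k - \<kappa>) * (Np * h n))"
    have ptw: "(SUP s\<in>K. ennreal (norm (fterm r z n k s))) \<le> ennreal (b (k, n))" if "(k, n) \<in> S" for k n
    proof (rule SUP_least)
      fix s assume s: "s \<in> K"
      have "norm (fterm r z n k s) \<le> b (k, n)"
        unfolding b_def a_def h_def g_def Np_def split
        using key_bound[OF r1 zb N2 _ _ Ab[OF s] \<epsilon>pos part[OF s], of n k] that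
        unfolding S_def \<kappa>_def by auto
      then show "ennreal (norm (fterm r z n k s)) \<le> ennreal (b (k, n))" by (rule ennreal_leI)
    qed
    have "SigmaN r z K N = infsum (\<lambda>(k, n). SUP s\<in>K. ennreal (norm (fterm r z n k s))) S"
      unfolding SigmaN_def S_def by simp
    also have "\<dots> \<le> ennreal (C * Np)"
    proof (rule infsum_le_finite_sums)
      show "(\<lambda>(k, n). SUP s\<in>K. ennreal (norm (fterm r z n k s))) summable_on S"
        by (rule nonneg_summable_on_complete) simp
      fix F assume finF: "finite F" and FS: "F \<subseteq> S"
      have "sum (\<lambda>(k, n). SUP s\<in>K. ennreal (norm (fterm r z n k s))) F \<le> (\<Sum>x\<in>F. ennreal (b x))"
        using FS ptw by (intro sum_mono) auto
      also have "\<dots> = ennreal (\<Sum>x\<in>F. b x)"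
        using a0 h0 Np0 by (intro sum_ennreal) (auto simp: b_def)
      also have "\<dots> \<le> ennreal (C * Np)"
      proof (rule ennreal_leI)
        have kF: "\<kappa> \<le> k" if "k \<in> fst ` F" for k using that FS unfolding S_def \<kappa>_def by auto
        have nF: "snd ` F \<subseteq> idx r N" using FS unfolding S_def by auto
        have "(\<Sum>x\<in>F. b x) \<le> (\<Sum>x\<in>fst ` F \<times> snd ` F. b x)"
          using finF a0 h0 Np0 by (intro sum_mono2) (auto simp: b_def intro: rev_image_eqI)
        also have "\<dots> = (\<Sum>k\<in>fst ` F. \<Sum>n\<in>snd ` F. a (k - \<kappa>) * (Np * h n))"
          unfolding b_def sum.cartesian_product by simp
        also have "\<dots> = Np * (\<Sum>k\<in>fst ` F. \<Sum>n\<in>snd ` F. a (k - \<kappa>) * h n)"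
          by (simp add: sum_distrib_left mult_ac)
        also have "\<dots> = Np * ((\<Sum>k\<in>fst ` F. a (k - \<kappa>)) * (\<Sum>n\<in>snd ` F. h n))"
          by (simp add: sum_product)
        also have "\<dots> \<le> Np * (suminf a * (suminf g)^r)"
        proof (intro mult_left_mono mult_mono Np0)
          have inj: "inj_on (\<lambda>k. k - \<kappa>) (fst ` F)" proof (rule inj_onI)
            fix x y assume "x \<in> fst ` F" "y \<in> fst ` F" "x - \<kappa> = y - \<kappa>"
            then show "x = y" using kF[of x] kF[of y] by linarith
          qed
          have "(\<Sum>k\<in>fst ` F. a (k - \<kappa>)) = (\<Sum>m\<in>(\<lambda>k. k - \<kappa>) ` fst ` F. a m)"
            by (simp add: sum.reindex[OF inj])
          also have "\<dots> \<le> suminf a" using a_sum finF a0 by (intro sum_le_suminf) auto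
          finally show "(\<Sum>k\<in>fst ` F. a (k - \<kappa>)) \<le> suminf a" .
          show "(\<Sum>n\<in>snd ` F. h n) \<le> (suminf g)^r"
            unfolding h_def using g0 g_sum finF nF by (intro idx_sum_bound) auto
          show "0 \<le> suminf a" using a_sum a0 by (intro suminf_nonneg) auto
          show "0 \<le> (\<Sum>n\<in>snd ` F. h n)" using h0 by (intro sum_nonneg) auto
        qed
        finally show "(\<Sum>x\<in>F. b x) \<le> C * Np" unfolding C_def by (simp add: mult_ac)
      qed
      finally show "sum (\<lambda>(k, n). SUP s\<in>K. ennreal (norm (fterm r z n k s))) F \<le> ennreal (C * Np)" .
    qed
    finally show ?thesis unfolding Np_def .
  qed

  show ?thesis
  proof
    show "\<forall>N\<ge>2. SigmaN r z K N < \<infinity>"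
      using main by (metis ennreal_less_top infinity_ennreal_def order_le_less_trans)
    show "\<exists>\<epsilon>>0. \<exists>C::real. eventually (\<lambda>N. SigmaN r z K N \<le> ennreal (C * real N powr (-\<epsilon>))) at_top"
      using main \<epsilon>pos by (intro exI[of _ \<epsilon>] conjI exI[of _ C]) (auto intro: eventually_at_top_linorderI[of 2])
  qed
qed

end
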